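(* Let $G$ be a group with subgroups $H,G_1,G_2$ such that $H\le G_1$ and $H\le G_2$, and suppose there is $t\in G$ with $t^{-1}G_1t=G_2$ and $t^{-1}ht=h$ for all $h\in H$. Then for each $k\ge 1$ the map $H_k(G_1,H)\to H_k(G,G_2)$ induced by the inclusion equals the composite $$H_k(G_1,H)\xrightarrow{\ \partial\ }H_{k-1}(H)\xrightarrow{(-1)^k(\,\_\,\times t)}H_k(G,G_2),$$ where $\partial$ is the connecting homomorphism and $\_\times t$ is induced by the chain map $C_{k-1}(H)\to C_k(G)$ sending a bar chain $(h_1,\dots,h_{k-1})$ to $$\sum_{j=0}^{k-1}(-1)^{k-1-j}\,(h_1,\dots,h_j,t,h_{j+1},\dots,h_{k-1}),$$ followed by the projection to relative homology.
   Context: Group homology is computed with integer coefficients via the bar construction: $C_k(G)$ is the free abelian group on $k$-tuples $(g_1,\dots,g_k)$ of elements of $G$ with the usual bar differential; relative homology $H_*(G,K)$ for $K\le G$ is the homology of $C_*(G)/C_*(K)$. *)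

theory Defs
  imports "HOL-Algebra.Group"
begin

definition chains :: "'a set \<Rightarrow> nat \<Rightarrow> ('a list \<Rightarrow> int) set" where
  "chains A k = {c. finite {x. c x \<noteq> 0} \<and> (\<forall>x. c x \<noteq> 0 \<longrightarrow> length x = k \<and> set x \<subseteq> A)}"

definition bar_face :: "('a, 'b) monoid_scheme \<Rightarrow> 'a list \<Rightarrow> nat \<Rightarrow> 'a list" where
  "bar_face G x i =
     (if i = 0 then tl x
      else if i = length x then butlast x
      else take (i - 1) x @ [x ! (i - 1) \<otimes>\<^bsub>G\<^esub> x ! i] @ drop (i + 1) x)"

definition bar_d_gen :: "('a, 'b) monoid_scheme \<Rightarrow> 'a list \<Rightarrow> 'a list \<Rightarrow> int" where
  "bar_d_gen G x y =
     (if length x = 0 then 0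
      else (\<Sum>i\<in>{0..length x}. (-1) ^ i * (if bar_face G x i = y then 1 else 0)))"

definition bar_d :: "('a, 'b) monoid_scheme \<Rightarrow> ('a list \<Rightarrow> int) \<Rightarrow> 'a list \<Rightarrow> int" where
  "bar_d G c = (\<lambda>y. \<Sum>x\<in>{x. c x \<noteq> 0}. c x * bar_d_gen G x y)"

definition cross_gen :: "'a \<Rightarrow> 'a list \<Rightarrow> 'a list \<Rightarrow> int" where
  "cross_gen t x y = (\<Sum>j\<in>{0..length x}.
       (-1) ^ (length x - j) * (if take j x @ [t] @ drop j x = y then 1 else 0))"

definition cross :: "'a \<Rightarrow> ('a list \<Rightarrow> int) \<Rightarrow> 'a list \<Rightarrow> int" where
  "cross t c = (\<lambda>y. \<Sum>x\<in>{x. c x \<noteq> 0}. c x * cross_gen t x y)"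

text \<open>Relative homology H_k(A,B) = homology of C_*(A)/C_*(B), for subgroups B \<subseteq> A of G.
  Classes are represented as cosets (sets of chains in C_k(A)) of the relative boundaries.\<close>

definition rel_cycles :: "('a, 'b) monoid_scheme \<Rightarrow> 'a set \<Rightarrow> 'a set \<Rightarrow> nat \<Rightarrow> ('a list \<Rightarrow> int) set" where
  "rel_cycles G A B k = {z \<in> chains A k. bar_d G z \<in> chains B (k - 1)}"

definition rel_bdry :: "('a, 'b) monoid_scheme \<Rightarrow> 'a set \<Rightarrow> 'a set \<Rightarrow> nat \<Rightarrow> ('a list \<Rightarrow> int) set" where
  "rel_bdry G A B k = {(\<lambda>y. bar_d G w y + u y) | w u. w \<in> chains A (Suc k) \<and> u \<in> chains B k}"

definition rel_class :: "('a, 'b) monoid_scheme \<Rightarrow> 'a set \<Rightarrow> 'a set \<Rightarrow> nat \<Rightarrow> ('a list \<Rightarrow> int) \<Rightarrow> ('a list \<Rightarrow> int) set" where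
  "rel_class G A B k z = {(\<lambda>y. z y + b y) | b. b \<in> rel_bdry G A B k}"

definition rel_homology :: "('a, 'b) monoid_scheme \<Rightarrow> 'a set \<Rightarrow> 'a set \<Rightarrow> nat \<Rightarrow> ('a list \<Rightarrow> int) set set" where
  "rel_homology G A B k = rel_class G A B k ` rel_cycles G A B k"

definition abs_cycles :: "('a, 'b) monoid_scheme \<Rightarrow> 'a set \<Rightarrow> nat \<Rightarrow> ('a list \<Rightarrow> int) set" where
  "abs_cycles G A k = {z \<in> chains A k. bar_d G z = (\<lambda>_. 0)}"

definition abs_bdry :: "('a, 'b) monoid_scheme \<Rightarrow> 'a set \<Rightarrow> nat \<Rightarrow> ('a list \<Rightarrow> int) set" where
  "abs_bdry G A k = bar_d G ` chains A (Suc k)"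

definition abs_class :: "('a, 'b) monoid_scheme \<Rightarrow> 'a set \<Rightarrow> nat \<Rightarrow> ('a list \<Rightarrow> int) \<Rightarrow> ('a list \<Rightarrow> int) set" where
  "abs_class G A k z = {(\<lambda>y. z y + b y) | b. b \<in> abs_bdry G A k}"

definition abs_homology :: "('a, 'b) monoid_scheme \<Rightarrow> 'a set \<Rightarrow> nat \<Rightarrow> ('a list \<Rightarrow> int) set set" where
  "abs_homology G A k = abs_class G A k ` abs_cycles G A k"

text \<open>Maps on homology, defined through (arbitrary) representatives.\<close>

definition induced_incl :: "('a, 'b) monoid_scheme \<Rightarrow> 'a set \<Rightarrow> 'a set \<Rightarrow> nat \<Rightarrow> ('a list \<Rightarrow> int) set \<Rightarrow> ('a list \<Rightarrow> int) set" where
  "induced_incl G A' B' k X = rel_class G A' B' k (SOME z. z \<in> X)"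

definition connecting :: "('a, 'b) monoid_scheme \<Rightarrow> 'a set \<Rightarrow> nat \<Rightarrow> ('a list \<Rightarrow> int) set \<Rightarrow> ('a list \<Rightarrow> int) set" where
  "connecting G B k X = abs_class G B (k - 1) (bar_d G (SOME z. z \<in> X))"

definition cross_hom :: "('a, 'b) monoid_scheme \<Rightarrow> 'a \<Rightarrow> 'a set \<Rightarrow> 'a set \<Rightarrow> nat \<Rightarrow> ('a list \<Rightarrow> int) set \<Rightarrow> ('a list \<Rightarrow> int) set" where
  "cross_hom G t A' B' k Y = rel_class G A' B' k (cross t (SOME y. y \<in> Y))"

definition rel_scale :: "('a, 'b) monoid_scheme \<Rightarrow> 'a set \<Rightarrow> 'a set \<Rightarrow> nat \<Rightarrow> int \<Rightarrow> ('a list \<Rightarrow> int) set \<Rightarrow> ('a list \<Rightarrow> int) set" where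
  "rel_scale G A B k n X = rel_class G A B k (\<lambda>y. n * (SOME z. z \<in> X) y)"

end

theory Submission
  imports Defs
begin


definition lin :: "('x \<Rightarrow> 'y \<Rightarrow> int) \<Rightarrow> ('x \<Rightarrow> int) \<Rightarrow> 'y \<Rightarrow> int" where
  "lin f c = (\<lambda>y. \<Sum>x\<in>{x. c x \<noteq> 0}. c x * f x y)"

abbreviation fin :: "('x \<Rightarrow> int) \<Rightarrow> bool" where "fin c \<equiv> finite {x. c x \<noteq> 0}"

lemma lin_superset:
  assumes "finite S" "{x. c x \<noteq> 0} \<subseteq> S"
  shows "lin f c y = (\<Sum>x\<in>S. c x * f x y)"
  unfolding lin_def using assms by (intro sum.mono_neutral_left) auto

lemma lin_add:
  assumes "fin c1" "fin c2"
  shows "lin f (\<lambda>x. c1 x + c2 x) y = lin f c1 y + lin f c2 y"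
proof -
  let ?S = "{x. c1 x \<noteq> 0} \<union> {x. c2 x \<noteq> 0}"
  have f: "finite ?S" using assms by auto
  have "lin f (\<lambda>x. c1 x + c2 x) y = (\<Sum>x\<in>?S. (c1 x + c2 x) * f x y)"
    by (rule lin_superset[OF f]) auto
  also have "\<dots> = (\<Sum>x\<in>?S. c1 x * f x y) + (\<Sum>x\<in>?S. c2 x * f x y)"
    by (simp add: distrib_right sum.distrib)
  also have "\<dots> = lin f c1 y + lin f c2 y"
    using lin_superset[OF f, of c1 f y] lin_superset[OF f, of c2 f y] by auto
  finally show ?thesis .
qed

lemma lin_scale: "lin f (\<lambda>x. a * c x) y = a * lin f c y"
proof (cases "a = 0")
  case True then show ?thesis by (simp add: lin_def)
next
  case False
  then have "{x. a * c x \<noteq> 0} = {x. c x \<noteq> 0}" by auto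
  then show ?thesis by (simp add: lin_def sum_distrib_left mult.assoc)
qed

lemma lin_diff:
  assumes "fin c1" "fin c2"
  shows "lin f (\<lambda>x. c1 x - c2 x) y = lin f c1 y - lin f c2 y"
proof -
  have "fin (\<lambda>x. - c2 x)" using assms by simp
  then have "lin f (\<lambda>x. c1 x + (- c2 x)) y = lin f c1 y + lin f (\<lambda>x. - c2 x) y"
    by (rule lin_add[OF assms(1)])
  moreover have "lin f (\<lambda>x. - c2 x) y = - lin f c2 y" using lin_scale[of f "-1" c2 y] by simp
  ultimately show ?thesis by simp
qed

lemma lin_cong: "(\<And>x. c x \<noteq> 0 \<Longrightarrow> f x = g x) \<Longrightarrow> lin f c = lin g c"
  unfolding lin_def by (intro ext sum.cong) auto

lemma lin_fsub: "lin f c y - lin g c y = lin (\<lambda>x y. f x y - g x y) c y"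
  unfolding lin_def by (simp add: sum_subtractf right_diff_distrib)

lemma lin_fscale: "a * lin f c y = lin (\<lambda>x y. a * f x y) c y"
  unfolding lin_def by (simp add: sum_distrib_left algebra_simps)

lemma lin_supp: "{y. lin f c y \<noteq> 0} \<subseteq> (\<Union>x\<in>{x. c x \<noteq> 0}. {y. f x y \<noteq> 0})"
proof
  fix y assume "y \<in> {y. lin f c y \<noteq> 0}"
  then have "(\<Sum>x\<in>{x. c x \<noteq> 0}. c x * f x y) \<noteq> 0" by (simp add: lin_def)
  then obtain x where "x \<in> {x. c x \<noteq> 0}" "c x * f x y \<noteq> 0"
    by (meson sum.not_neutral_contains_not_neutral)
  then show "y \<in> (\<Union>x\<in>{x. c x \<noteq> 0}. {y. f x y \<noteq> 0})" by auto
qed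

lemma fin_lin: "fin c \<Longrightarrow> (\<And>x. c x \<noteq> 0 \<Longrightarrow> fin (f x)) \<Longrightarrow> fin (lin f c)"
  by (rule finite_subset[OF lin_supp]) auto

lemma lin_comp:
  assumes "fin c" "\<And>x. c x \<noteq> 0 \<Longrightarrow> fin (f x)"
  shows "lin g (lin f c) = lin (\<lambda>x. lin g (f x)) c"
proof
  fix y
  let ?S = "{x. c x \<noteq> 0}"
  let ?T = "\<Union>x\<in>?S. {y. f x y \<noteq> 0}"
  have fT: "finite ?T" using assms by auto
  have "lin g (lin f c) y = (\<Sum>x'\<in>?T. lin f c x' * g x' y)"
    by (rule lin_superset[OF fT lin_supp])
  also have "\<dots> = (\<Sum>x'\<in>?T. \<Sum>x\<in>?S. c x * f x x' * g x' y)"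
    by (simp add: lin_def sum_distrib_right)
  also have "\<dots> = (\<Sum>x\<in>?S. \<Sum>x'\<in>?T. c x * f x x' * g x' y)"
    by (rule sum.swap)
  also have "\<dots> = (\<Sum>x\<in>?S. c x * lin g (f x) y)"
  proof (rule sum.cong[OF refl])
    fix x assume x: "x \<in> ?S"
    have "lin g (f x) y = (\<Sum>x'\<in>?T. f x x' * g x' y)"
      by (rule lin_superset[OF fT]) (use x in auto)
    then show "(\<Sum>x'\<in>?T. c x * f x x' * g x' y) = c x * lin g (f x) y"
      by (simp add: sum_distrib_left mult.assoc)
  qed
  also have "\<dots> = lin (\<lambda>x. lin g (f x)) c y" by (simp add: lin_def)
  finally show "lin g (lin f c) y = lin (\<lambda>x. lin g (f x)) c y" .
qed

lemma lin_delta: "fin c \<Longrightarrow> lin (\<lambda>x y. if x = y then 1 else 0) c = c"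
  unfolding lin_def by (rule ext) (auto simp: if_distrib cong: if_cong)

lemma lin_chains:
  assumes "fin c" "\<And>x. c x \<noteq> 0 \<Longrightarrow> f x \<in> chains A n"
  shows "lin f c \<in> chains A n"
proof -
  have "fin (lin f c)" using assms by (intro fin_lin) (auto simp: chains_def)
  moreover have "\<forall>y. lin f c y \<noteq> 0 \<longrightarrow> length y = n \<and> set y \<subseteq> A"
    using lin_supp[of f c] assms(2) unfolding chains_def by blast
  ultimately show ?thesis unfolding chains_def by blast
qed

definition gs :: "'i set \<Rightarrow> ('i \<Rightarrow> int) \<Rightarrow> ('i \<Rightarrow> 'y) \<Rightarrow> 'y \<Rightarrow> int" where
  "gs I a g = (\<lambda>y. \<Sum>i\<in>I. a i * (if g i = y then 1 else 0))"

lemma gs_supp: "{y. gs I a g y \<noteq> 0} \<subseteq> g ` I"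
  unfolding gs_def by (auto elim!: sum.not_neutral_contains_not_neutral split: if_splits)

lemma fin_gs: "finite I \<Longrightarrow> fin (gs I a g)"
  by (rule finite_subset[OF gs_supp]) auto

lemma lin_gs:
  assumes "finite I"
  shows "lin f (gs I a g) y = (\<Sum>i\<in>I. a i * f (g i) y)"
proof -
  have "lin f (gs I a g) y = (\<Sum>x\<in>g ` I. gs I a g x * f x y)"
    by (rule lin_superset[OF _ gs_supp]) (use assms in auto)
  also have "\<dots> = (\<Sum>x\<in>g ` I. \<Sum>i\<in>I. (if g i = x then a i * f x y else 0))"
    unfolding gs_def sum_distrib_right by (intro sum.cong refl) auto
  also have "\<dots> = (\<Sum>i\<in>I. \<Sum>x\<in>g ` I. (if g i = x then a i * f x y else 0))"
    by (rule sum.swap)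
  also have "\<dots> = (\<Sum>i\<in>I. a i * f (g i) y)"
    using assms by (intro sum.cong refl) (simp add: sum.delta)
  finally show ?thesis .
qed

lemma gs_chains:
  assumes "finite I" "\<And>i. i \<in> I \<Longrightarrow> length (g i) = n \<and> set (g i) \<subseteq> A"
  shows "gs I a g \<in> chains A n"
  using fin_gs[OF assms(1), of a g] gs_supp[of I a g] assms(2) unfolding chains_def by blast



lemma length_face:
  "1 \<le> length x \<Longrightarrow> i \<le> length x \<Longrightarrow> length (bar_face G x i) = length x - 1"
  unfolding bar_face_def by auto

lemma nth_face:
  assumes "i \<le> length x" "p < length x - 1"
  shows "bar_face G x i ! p = (if p + 1 < i then x ! p
            else if p + 1 = i \<and> i < length x then x ! p \<otimes>\<^bsub>G\<^esub> x ! (p + 1) else x ! (p + 1))"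
  using assms unfolding bar_face_def
  by (auto simp: nth_tl nth_butlast nth_append min_def)

lemma set_face:
  assumes "set x \<subseteq> A" "\<And>a b. a \<in> A \<Longrightarrow> b \<in> A \<Longrightarrow> a \<otimes>\<^bsub>G\<^esub> b \<in> A" "i \<le> length x"
  shows "set (bar_face G x i) \<subseteq> A"
proof -
  have "x ! (i - 1) \<in> A" "x ! i \<in> A" if "0 < i" "i < length x"
    using assms(1,3) that by (auto intro!: subsetD[OF assms(1)] nth_mem)
  moreover have "set (tl x) \<subseteq> set x" by (cases x) auto
  ultimately show ?thesis using assms unfolding bar_face_def
    by (auto dest: list.set_sel(2) in_set_butlastD in_set_takeD in_set_dropD)
qed

context group begin

lemma simplicial:
  assumes x: "set x \<subseteq> carrier G" and n: "2 \<le> length x" and ij: "i \<le> j" "j + 1 \<le> length x"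
  shows "bar_face G (bar_face G x (j+1)) i = bar_face G (bar_face G x i) j"
proof (rule nth_equalityI)
  have l1: "length (bar_face G x (j+1)) = length x - 1" "length (bar_face G x i) = length x - 1"
    using assms by (intro length_face; simp)+
  show "length (bar_face G (bar_face G x (j+1)) i) = length (bar_face G (bar_face G x i) j)"
    using assms l1 by (simp add: length_face)
  fix p assume p: "p < length (bar_face G (bar_face G x (j+1)) i)"
  then have p': "p < length x - 2" using assms l1 by (simp add: length_face)
  have c: "\<And>q. q < length x \<Longrightarrow> x ! q \<in> carrier G" using x by (auto intro: nth_mem)
  show "bar_face G (bar_face G x (j+1)) i ! p = bar_face G (bar_face G x i) j ! p"
    using p' ij n l1 c
    by (auto simp: nth_face m_assoc)
qed

end


lemma bdg_gs: "bar_d_gen G x = (if length x = 0 then (\<lambda>_. 0) else gs {0..length x} (\<lambda>i. (-1)^i) (bar_face G x))"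
  unfolding bar_d_gen_def gs_def by auto

lemma fin_bdg: "fin (bar_d_gen G x)"
  unfolding bdg_gs by (auto intro: fin_gs)

lemma lin_bdg: "lin f (bar_d_gen G x) y =
   (if length x = 0 then 0 else (\<Sum>i\<in>{0..length x}. (-1)^i * f (bar_face G x i) y))"
proof (cases "length x = 0")
  case True then show ?thesis by (simp add: bdg_gs lin_def)
next
  case False then show ?thesis by (simp add: bdg_gs lin_gs)
qed

context group begin

lemma dd_gen:
  assumes x: "set x \<subseteq> carrier G"
  shows "lin (bar_d_gen G) (bar_d_gen G x) y = 0"
proof -
  define n where "n = length x"
  consider "n = 0" | "n = 1" | "2 \<le> n" by linarith
  then show ?thesis
  proof cases
    case 1 then show ?thesis by (simp add: lin_bdg n_def)
  next
    case 2
    then have "length (bar_face G x i) = 0" if "i \<le> n" for i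
      using length_face[of x i G] that n_def by simp
    then show ?thesis using 2 by (simp add: lin_bdg n_def bar_d_gen_def)
  next
    case 3
    define F where "F = (\<lambda>(i::nat,j::nat). (-1::int)^i * ((-1)^j *
        (if bar_face G (bar_face G x i) j = y then 1 else 0)))"
    define P where "P = {0..n} \<times> {0..n-1}"
    define A where "A = {p \<in> P. snd p < fst p}"
    define B where "B = {p \<in> P. fst p \<le> snd p}"
    have lf: "length (bar_face G x i) = n - 1" if "i \<le> n" for i
      using length_face[of x i G] that n_def 3 by simp
    have "lin (bar_d_gen G) (bar_d_gen G x) y =
        (\<Sum>i\<in>{0..n}. (-1)^i * bar_d_gen G (bar_face G x i) y)"
      unfolding lin_bdg using 3 n_def by auto
    also have "\<dots> = (\<Sum>i\<in>{0..n}. \<Sum>j\<in>{0..n-1}. F (i,j))"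
      using 3 lf by (intro sum.cong refl) (simp add: bar_d_gen_def F_def sum_distrib_left)
    also have "\<dots> = sum F P" unfolding P_def by (simp add: sum.cartesian_product)
    also have "\<dots> = sum F A + sum F B"
    proof -
      have "P = A \<union> B" "A \<inter> B = {}" by (auto simp: A_def B_def)
      moreover have "finite A" "finite B" by (auto simp: A_def B_def P_def)
      ultimately show ?thesis by (simp add: sum.union_disjoint)
    qed
    also have "sum F A = sum (\<lambda>p. F ((\<lambda>(i,j). (j+1,i)) p)) B"
    proof (rule sum.reindex_bij_betw[symmetric])
      show "bij_betw (\<lambda>(i,j). (j+1,i)) B A"
        by (rule bij_betw_byWitness[where f'="\<lambda>(i,j). (j, i - 1)"])
           (use 3 in \<open>auto simp: A_def B_def P_def\<close>)
    qed
    also have "\<dots> = sum (\<lambda>p. - F p) B"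
    proof (rule sum.cong[OF refl])
      fix p assume "p \<in> B"
      then obtain i j where p: "p = (i,j)" "i \<le> j" "j \<le> n - 1" unfolding B_def P_def by auto
      then show "F ((\<lambda>(i,j). (j+1,i)) p) = - F p"
        using simplicial[OF x, of i j] 3 n_def by (auto simp: F_def)
    qed
    finally show ?thesis by (simp add: sum_negf)
  qed
qed

end


definition cj :: "('a, 'b) monoid_scheme \<Rightarrow> 'a \<Rightarrow> 'a \<Rightarrow> 'a" where
  "cj G t g = inv\<^bsub>G\<^esub> t \<otimes>\<^bsub>G\<^esub> g \<otimes>\<^bsub>G\<^esub> t"

definition ins :: "('a, 'b) monoid_scheme \<Rightarrow> 'a \<Rightarrow> nat \<Rightarrow> 'a list \<Rightarrow> 'a list" where
  "ins G t j x = take j x @ [t] @ map (cj G t) (drop j x)"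

lemma length_ins: "j \<le> length x \<Longrightarrow> length (ins G t j x) = Suc (length x)"
  by (simp add: ins_def)

lemma nth_ins: "j \<le> length x \<Longrightarrow> p < Suc (length x) \<Longrightarrow>
   ins G t j x ! p = (if p < j then x ! p else if p = j then t else cj G t (x ! (p - 1)))"
  by (auto simp: ins_def nth_append min_def)

context group begin

lemma t_inv_t: "t \<in> carrier G \<Longrightarrow> z \<in> carrier G \<Longrightarrow> t \<otimes> (inv t \<otimes> z) = z"
  by (simp add: m_assoc[symmetric])

lemma cj_mult: "t \<in> carrier G \<Longrightarrow> a \<in> carrier G \<Longrightarrow> b \<in> carrier G \<Longrightarrow>
    cj G t a \<otimes> cj G t b = cj G t (a \<otimes> b)"
  unfolding cj_def by (simp add: m_assoc t_inv_t)

lemma t_cj: "t \<in> carrier G \<Longrightarrow> a \<in> carrier G \<Longrightarrow> t \<otimes> cj G t a = a \<otimes> t"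
  unfolding cj_def by (metis inv_closed m_assoc m_closed r_inv l_one)

lemma cj_closed: "t \<in> carrier G \<Longrightarrow> a \<in> carrier G \<Longrightarrow> cj G t a \<in> carrier G"
  unfolding cj_def by simp

lemma face_ins_a:
  assumes x: "set x \<subseteq> carrier G" and t: "t \<in> carrier G" and ij: "i < j" "j \<le> length x"
  shows "bar_face G (ins G t j x) i = ins G t (j - 1) (bar_face G x i)"
proof (rule nth_equalityI)
  have lf: "length (bar_face G x i) = length x - 1" using ij by (intro length_face) auto
  show "length (bar_face G (ins G t j x) i) = length (ins G t (j - 1) (bar_face G x i))"
    using ij lf by (simp add: length_face length_ins)
  fix p assume "p < length (bar_face G (ins G t j x) i)"
  then have p: "p < length x" using ij by (simp add: length_face length_ins)
  have c: "\<And>q. q < length x \<Longrightarrow> x ! q \<in> carrier G" using x by (auto intro: nth_mem)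
  show "bar_face G (ins G t j x) i ! p = ins G t (j - 1) (bar_face G x i) ! p"
    using p ij lf c t by (auto simp: nth_face nth_ins length_ins cj_mult)
qed

lemma face_ins_b:
  assumes x: "set x \<subseteq> carrier G" and t: "t \<in> carrier G" and ij: "j + 1 < i" "i \<le> Suc (length x)"
  shows "bar_face G (ins G t j x) i = ins G t j (bar_face G x (i - 1))"
proof (rule nth_equalityI)
  have lf: "length (bar_face G x (i - 1)) = length x - 1" using ij by (intro length_face) auto
  show "length (bar_face G (ins G t j x) i) = length (ins G t j (bar_face G x (i - 1)))"
    using ij lf by (simp add: length_face length_ins)
  fix p assume "p < length (bar_face G (ins G t j x) i)"
  then have p: "p < length x" using ij by (simp add: length_face length_ins)
  have c: "\<And>q. q < length x \<Longrightarrow> x ! q \<in> carrier G" using x by (auto intro: nth_mem)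
  have s2: "Suc (i - Suc (Suc 0)) = i - Suc 0" using ij by arith
  show "bar_face G (ins G t j x) i ! p = ins G t j (bar_face G x (i - 1)) ! p"
    using p ij lf c t by (auto simp: nth_face nth_ins length_ins cj_mult s2)
qed

lemma face_ins_e:
  assumes x: "set x \<subseteq> carrier G" and t: "t \<in> carrier G" and j: "j < length x"
  shows "bar_face G (ins G t j x) (j + 1) = bar_face G (ins G t (j + 1) x) (j + 1)"
proof (rule nth_equalityI)
  show "length (bar_face G (ins G t j x) (j + 1)) = length (bar_face G (ins G t (j + 1) x) (j + 1))"
    using j by (simp add: length_face length_ins)
  fix p assume "p < length (bar_face G (ins G t j x) (j + 1))"
  then have p: "p < length x" using j by (simp add: length_face length_ins)
  have c: "\<And>q. q < length x \<Longrightarrow> x ! q \<in> carrier G" using x by (auto intro: nth_mem)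
  show "bar_face G (ins G t j x) (j + 1) ! p = bar_face G (ins G t (j + 1) x) (j + 1) ! p"
    using p j c t by (auto simp: nth_face nth_ins length_ins t_cj)
qed

lemma face_ins_c: "bar_face G (ins G t 0 x) 0 = map (cj G t) x"
  by (simp add: bar_face_def ins_def)

lemma face_ins_d: "bar_face G (ins G t (length x) x) (Suc (length x)) = x"
  by (simp add: bar_face_def ins_def)

end


definition sh :: "('a, 'b) monoid_scheme \<Rightarrow> 'a \<Rightarrow> 'a list \<Rightarrow> 'a list \<Rightarrow> int" where
  "sh G t x = gs {0..length x} (\<lambda>j. (-1)^(length x - j)) (\<lambda>j. ins G t j x)"

lemma lin_sh: "lin f (sh G t x) y = (\<Sum>j\<in>{0..length x}. (-1)^(length x - j) * f (ins G t j x) y)"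
  unfolding sh_def by (simp add: lin_gs)

lemma fin_sh: "fin (sh G t x)"
  unfolding sh_def by (simp add: fin_gs)

lemma sum4:
  assumes "finite P" "P = P1 \<union> P2 \<union> P3 \<union> P4"
    "P1 \<inter> P2 = {}" "P1 \<inter> P3 = {}" "P1 \<inter> P4 = {}" "P2 \<inter> P3 = {}" "P2 \<inter> P4 = {}" "P3 \<inter> P4 = {}"
  shows "sum F P = sum F P1 + sum F P2 + sum F P3 + sum F P4"
proof -
  have f: "finite P1" "finite P2" "finite P3" "finite P4" using assms by auto
  have "sum F P = sum F (P1 \<union> P2 \<union> P3) + sum F P4"
    using assms f by (subst assms(2), intro sum.union_disjoint) auto
  also have "sum F (P1 \<union> P2 \<union> P3) = sum F (P1 \<union> P2) + sum F P3"
    using assms f by (intro sum.union_disjoint) auto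
  also have "sum F (P1 \<union> P2) = sum F P1 + sum F P2"
    using assms f by (intro sum.union_disjoint) auto
  finally show ?thesis .
qed

lemma neg_pow: "j < n \<Longrightarrow> (-1::int)^(n - j) = - ((-1)^(n - 1 - j))"
proof -
  assume "j < n"
  then have "n - j = Suc (n - 1 - j)" by arith
  then show ?thesis by simp
qed

lemma pow_add_sub: "j \<le> n \<Longrightarrow> (-1::int)^(n - j) * (-1)^j = (-1)^n"
  by (simp add: power_add[symmetric])

context group begin

lemma homotopy_gen:
  assumes x: "set x \<subseteq> carrier G" and t: "t \<in> carrier G"
  shows "lin (bar_d_gen G) (sh G t x) y - lin (sh G t) (bar_d_gen G x) y =
     (-1)^(Suc (length x)) * ((if x = y then 1 else 0) - (if map (cj G t) x = y then 1 else 0))"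
proof -
  define n where "n = length x"
  show ?thesis
  proof (cases "n = 0")
    case True
    then show ?thesis
      by (simp add: n_def lin_sh lin_bdg ins_def bar_d_gen_def bar_face_def)
  next
    case False
    then obtain m where m: "n = Suc m" by (cases n) auto
    define I where "I = (\<lambda>i j. (if bar_face G (ins G t j x) i = y then 1 else (0::int)))"
    define F where "F = (\<lambda>(i::nat,j::nat). (-1::int)^(n-j) * ((-1)^i * I i j))"
    define E where "E = (\<lambda>(i::nat,j::nat). (-1::int)^i * ((-1)^(n - 1 - j) *
          (if ins G t j (bar_face G x i) = y then 1 else 0)))"
    define P where "P = {0..Suc n} \<times> {0..n}"
    define Q where "Q = {0..n} \<times> {0..n-1}"
    define P1 where "P1 = {p\<in>P. fst p < snd p}"
    define P2 where "P2 = {p\<in>P. snd p + 1 < fst p}"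
    define P3 where "P3 = {p\<in>P. fst p = snd p}"
    define P4 where "P4 = {p\<in>P. fst p = snd p + 1}"
    define Q1 where "Q1 = {p\<in>Q. fst p \<le> snd p}"
    define Q2 where "Q2 = {p\<in>Q. snd p < fst p}"
    have lins: "length (ins G t j x) = Suc n" if "j \<le> n" for j
      using that by (simp add: length_ins n_def)
    have lf: "length (bar_face G x i) = n - 1" if "i \<le> n" for i
      unfolding n_def by (rule length_face) (use that False n_def in \<open>auto simp: Suc_le_eq\<close>)
    have "lin (bar_d_gen G) (sh G t x) y = (\<Sum>j\<in>{0..n}. (-1)^(n - j) * bar_d_gen G (ins G t j x) y)"
      by (simp add: lin_sh n_def)
    also have "\<dots> = (\<Sum>j\<in>{0..n}. \<Sum>i\<in>{0..Suc n}. F (i,j))"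
      using lins by (intro sum.cong refl) (simp add: bar_d_gen_def F_def I_def sum_distrib_left right_diff_distrib)
    also have "\<dots> = sum F P"
      unfolding P_def by (subst sum.swap) (simp add: sum.cartesian_product)
    finally have L1: "lin (bar_d_gen G) (sh G t x) y = sum F P" .
    have "lin (sh G t) (bar_d_gen G x) y = (\<Sum>i\<in>{0..n}. (-1)^i * sh G t (bar_face G x i) y)"
      unfolding lin_bdg using False n_def by auto
    also have "\<dots> = (\<Sum>i\<in>{0..n}. \<Sum>j\<in>{0..n-1}. E (i,j))"
      using lf by (intro sum.cong refl) (simp add: sh_def gs_def E_def sum_distrib_left)
    also have "\<dots> = sum E Q"
      unfolding Q_def by (simp add: sum.cartesian_product)
    also have "\<dots> = sum E Q1 + sum E Q2"
    proof -
      have "Q = Q1 \<union> Q2" "Q1 \<inter> Q2 = {}" by (auto simp: Q1_def Q2_def)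
      moreover have "finite Q1" "finite Q2" by (auto simp: Q1_def Q2_def Q_def)
      ultimately show ?thesis by (simp add: sum.union_disjoint)
    qed
    finally have L2: "lin (sh G t) (bar_d_gen G x) y = sum E Q1 + sum E Q2" .
    have SP: "sum F P = sum F P1 + sum F P2 + sum F P3 + sum F P4"
      by (rule sum4) (auto simp: P_def P1_def P2_def P3_def P4_def)
    have S1: "sum F P1 = sum E Q1"
    proof -
      have "sum F P1 = sum (\<lambda>p. F ((\<lambda>(i,j). (i, j+1)) p)) Q1"
        by (rule sum.reindex_bij_betw[symmetric], rule bij_betw_byWitness[where f'="\<lambda>(i,j). (i, j - 1)"])
           (use m in \<open>auto simp: P1_def Q1_def P_def Q_def\<close>)
      also have "\<dots> = sum E Q1"
      proof (rule sum.cong[OF refl])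
        fix p assume "p \<in> Q1"
        then obtain i j where p: "p = (i,j)" "i \<le> j" "j \<le> n - 1" unfolding Q1_def Q_def by auto
        then show "F ((\<lambda>(i,j). (i, j+1)) p) = E p"
          using face_ins_a[OF x t, of i "j+1"] m n_def by (auto simp: F_def E_def I_def)
      qed
      finally show ?thesis .
    qed
    have S2: "sum F P2 = sum E Q2"
    proof -
      have "sum F P2 = sum (\<lambda>p. F ((\<lambda>(i,j). (i+1, j)) p)) Q2"
        by (rule sum.reindex_bij_betw[symmetric], rule bij_betw_byWitness[where f'="\<lambda>(i,j). (i - 1, j)"])
           (use m in \<open>auto simp: P2_def Q2_def P_def Q_def\<close>)
      also have "\<dots> = sum E Q2"
      proof (rule sum.cong[OF refl])
        fix p assume "p \<in> Q2"
        then obtain i j where p: "p = (i,j)" "j < i" "i \<le> n" unfolding Q2_def Q_def by auto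
        then have "(-1::int)^(n-j) = - ((-1)^(n - 1 - j))" by (intro neg_pow) auto
        then show "F ((\<lambda>(i,j). (i+1, j)) p) = E p"
          using face_ins_b[OF x t, of j "i+1"] p n_def by (auto simp: F_def E_def I_def)
      qed
      finally show ?thesis .
    qed
    define g where "g = (\<lambda>j. I j j)"
    define h where "h = (\<lambda>j. I (Suc j) j)"
    have S3: "sum F P3 = (-1)^n * sum g {0..n}"
    proof -
      have "sum F P3 = sum (\<lambda>j. F (j,j)) {0..n}"
        by (rule sum.reindex_bij_betw[symmetric], rule bij_betw_byWitness[where f'="fst"])
           (auto simp: P3_def P_def)
      also have "\<dots> = sum (\<lambda>j. (-1)^n * g j) {0..n}"
        by (intro sum.cong refl) (simp add: F_def g_def mult.assoc[symmetric] pow_add_sub)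
      finally show ?thesis by (simp add: sum_distrib_left)
    qed
    have S4: "sum F P4 = - ((-1)^n * sum h {0..n})"
    proof -
      have "sum F P4 = sum (\<lambda>j. F (Suc j,j)) {0..n}"
        by (rule sum.reindex_bij_betw[symmetric], rule bij_betw_byWitness[where f'="snd"])
           (auto simp: P4_def P_def)
      also have "\<dots> = sum (\<lambda>j. - ((-1)^n * h j)) {0..n}"
        by (intro sum.cong refl) (simp add: F_def h_def mult.assoc[symmetric] pow_add_sub)
      finally show ?thesis by (simp add: sum_distrib_left sum_negf)
    qed
    have G: "sum g {0..n} = g 0 + (\<Sum>i\<in>{0..m}. g (Suc i))"
      unfolding m by (subst sum.atLeast0_atMost_Suc_shift) (simp add: comp_def)
    have Hh: "sum h {0..n} = (\<Sum>i\<in>{0..m}. h i) + h n"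
      unfolding m by (rule sum.atLeast0_atMost_Suc)
    have gh: "(\<Sum>i\<in>{0..m}. h i) = (\<Sum>i\<in>{0..m}. g (Suc i))"
      using face_ins_e[OF x t] m n_def by (intro sum.cong refl) (auto simp: g_def h_def I_def)
    have g0: "g 0 = (if map (cj G t) x = y then 1 else 0)"
      by (simp add: g_def I_def face_ins_c)
    have hn: "h n = (if x = y then 1 else 0)"
      using face_ins_d[of t x] by (simp add: h_def I_def n_def)
    show ?thesis
      unfolding L1 L2 SP S1 S2 S3 S4 G Hh gh g0 hn n_def[symmetric]
      by (simp add: algebra_simps)
  qed
qed

end


lemma bar_d_lin: "bar_d G c = lin (bar_d_gen G) c"
  by (simp add: bar_d_def lin_def)

lemma cross_lin: "cross t c = lin (cross_gen t) c"
  by (simp add: cross_def lin_def)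

lemma chainsD: "c \<in> chains A k \<Longrightarrow> c x \<noteq> 0 \<Longrightarrow> length x = k \<and> set x \<subseteq> A"
  by (simp add: chains_def)

lemma chains_fin: "c \<in> chains A k \<Longrightarrow> fin c"
  by (simp add: chains_def)

lemma chains_zero: "(\<lambda>_. 0) \<in> chains A k"
  by (simp add: chains_def)

lemma chains_add:
  assumes "c1 \<in> chains A k" "c2 \<in> chains A k" shows "(\<lambda>y. c1 y + c2 y) \<in> chains A k"
proof -
  have s: "{x. c1 x + c2 x \<noteq> 0} \<subseteq> {x. c1 x \<noteq> 0} \<union> {x. c2 x \<noteq> 0}" by auto
  show ?thesis using assms finite_subset[OF s] s unfolding chains_def by blast
qed

lemma chains_scale: "c \<in> chains A k \<Longrightarrow> (\<lambda>y. a * c y) \<in> chains A k"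
  unfolding chains_def by (auto intro: finite_subset[of _ "{x. c x \<noteq> 0}"])

lemma chains_mono: "A \<subseteq> B \<Longrightarrow> c \<in> chains A k \<Longrightarrow> c \<in> chains B k"
  unfolding chains_def by auto

lemma bd_chains:
  assumes "\<And>a b. a \<in> A \<Longrightarrow> b \<in> A \<Longrightarrow> a \<otimes>\<^bsub>G\<^esub> b \<in> A" "c \<in> chains A k"
  shows "bar_d G c \<in> chains A (k - 1)"
  unfolding bar_d_lin
proof (rule lin_chains[OF chains_fin[OF assms(2)]])
  fix x assume "c x \<noteq> 0"
  then have x: "length x = k" "set x \<subseteq> A" using chainsD[OF assms(2)] by auto
  show "bar_d_gen G x \<in> chains A (k - 1)"
  proof (cases "length x = 0")
    case True then show ?thesis by (simp add: bdg_gs chains_zero)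
  next
    case False
    have "gs {0..length x} (\<lambda>i. (-1)^i) (bar_face G x) \<in> chains A (k - 1)"
    proof (rule gs_chains)
      fix i assume i: "i \<in> {0..length x}"
      show "length (bar_face G x i) = k - 1 \<and> set (bar_face G x i) \<subseteq> A"
        using length_face[of x i G] set_face[of x A G i] x False i assms(1) by auto
    qed simp
    then show ?thesis unfolding bdg_gs using False by simp
  qed
qed

lemma lin_comb3:
  assumes "fin a" "fin b" "fin c"
  shows "lin f (\<lambda>x. p * a x + q * b x + r * c x) y = p * lin f a y + q * lin f b y + r * lin f c y"
proof -
  have fa: "fin (\<lambda>x. p * a x)" "fin (\<lambda>x. q * b x)" "fin (\<lambda>x. r * c x)"
    using assms by (auto intro: finite_subset[of _ "{x. a x \<noteq> 0}"] finite_subset[of _ "{x. b x \<noteq> 0}"]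
        finite_subset[of _ "{x. c x \<noteq> 0}"])
  have "fin (\<lambda>x. p * a x + q * b x)"
    using fa by (auto intro: finite_subset[of _ "{x. p * a x \<noteq> 0} \<union> {x. q * b x \<noteq> 0}"])
  then show ?thesis using fa by (simp add: lin_add lin_scale)
qed

context group begin

lemma dd_chain:
  assumes "c \<in> chains (carrier G) k"
  shows "bar_d G (bar_d G c) = (\<lambda>_. 0)"
proof -
  have "bar_d G (bar_d G c) = lin (\<lambda>x. lin (bar_d_gen G) (bar_d_gen G x)) c"
    unfolding bar_d_lin by (rule lin_comp[OF chains_fin[OF assms] fin_bdg])
  also have "\<dots> = lin (\<lambda>x _. 0) c"
    by (rule lin_cong, rule ext, rule dd_gen) (use chainsD[OF assms] in auto)
  also have "\<dots> = (\<lambda>_. 0)" by (simp add: lin_def)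
  finally show ?thesis .
qed

definition ct :: "'a \<Rightarrow> 'a list \<Rightarrow> 'a list \<Rightarrow> int" where
  "ct t x y = (if map (cj G t) x = y then 1 else 0)"

lemma homotopy_chain:
  assumes c: "c \<in> chains (carrier G) k" and t: "t \<in> carrier G"
  shows "bar_d G (lin (sh G t) c) y - lin (sh G t) (bar_d G c) y =
         (-1)^(Suc k) * (c y - lin (ct t) c y)"
proof -
  have f: "fin c" by (rule chains_fin[OF c])
  have "bar_d G (lin (sh G t) c) y - lin (sh G t) (bar_d G c) y =
     lin (\<lambda>x. lin (bar_d_gen G) (sh G t x)) c y - lin (\<lambda>x. lin (sh G t) (bar_d_gen G x)) c y"
    unfolding bar_d_lin by (simp add: lin_comp[OF f fin_sh] lin_comp[OF f fin_bdg])
  also have "\<dots> = lin (\<lambda>x y. lin (bar_d_gen G) (sh G t x) y - lin (sh G t) (bar_d_gen G x) y) c y"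
    by (rule lin_fsub)
  also have "\<dots> = lin (\<lambda>x y. (-1)^(Suc k) * ((if x = y then 1 else 0) - ct t x y)) c y"
    by (rule arg_cong[where f="\<lambda>h. h y"], rule lin_cong, rule ext)
       (use chainsD[OF c] homotopy_gen t in \<open>auto simp: ct_def\<close>)
  also have "\<dots> = (-1)^(Suc k) * (lin (\<lambda>x y. if x = y then 1 else 0) c y - lin (ct t) c y)"
    by (simp only: lin_fsub lin_fscale)
  also have "\<dots> = (-1)^(Suc k) * (c y - lin (ct t) c y)"
    by (simp add: lin_delta[OF f])
  finally show ?thesis .
qed

lemma sh_chains:
  assumes c: "c \<in> chains (carrier G) k" and t: "t \<in> carrier G"
  shows "lin (sh G t) c \<in> chains (carrier G) (Suc k)"
proof (rule lin_chains[OF chains_fin[OF c]])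
  fix x assume "c x \<noteq> 0"
  then have x: "length x = k" "set x \<subseteq> carrier G" using chainsD[OF c] by auto
  show "sh G t x \<in> chains (carrier G) (Suc k)"
    unfolding sh_def using x t
    by (intro gs_chains) (auto simp: ins_def cj_closed dest: in_set_takeD in_set_dropD)
qed

lemma cross_chains:
  assumes c: "c \<in> chains (carrier G) k" and t: "t \<in> carrier G"
  shows "cross t c \<in> chains (carrier G) (Suc k)"
  unfolding cross_lin
proof (rule lin_chains[OF chains_fin[OF c]])
  fix x assume "c x \<noteq> 0"
  then have x: "length x = k" "set x \<subseteq> carrier G" using chainsD[OF c] by auto
  have "cross_gen t x = gs {0..length x} (\<lambda>j. (-1)^(length x - j)) (\<lambda>j. take j x @ [t] @ drop j x)"
    by (intro ext) (simp add: cross_gen_def gs_def)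
  moreover have "gs {0..length x} (\<lambda>j. (-1)^(length x - j)) (\<lambda>j. take j x @ [t] @ drop j x)
     \<in> chains (carrier G) (Suc k)"
    using x t by (intro gs_chains) (auto dest: in_set_takeD in_set_dropD)
  ultimately show "cross_gen t x \<in> chains (carrier G) (Suc k)" by simp
qed

lemma ct_chains:
  assumes c: "c \<in> chains A k" and m: "\<And>g. g \<in> A \<Longrightarrow> cj G t g \<in> B"
  shows "lin (ct t) c \<in> chains B k"
proof (rule lin_chains[OF chains_fin[OF c]])
  fix x assume "c x \<noteq> 0"
  then have x: "length x = k" "set x \<subseteq> A" using chainsD[OF c] by auto
  have "{y. ct t x y \<noteq> 0} = {map (cj G t) x}" by (auto simp: ct_def)
  then show "ct t x \<in> chains B k"
    using x m unfolding chains_def by (auto simp: ct_def)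
qed

lemma sh_cross_H:
  assumes "set x \<subseteq> H" "\<forall>h\<in>H. cj G t h = h"
  shows "sh G t x = cross_gen t x"
proof -
  have "map (cj G t) (drop j x) = drop j x" for j
    using assms by (auto intro!: map_idI dest: in_set_dropD)
  then show ?thesis by (intro ext) (simp add: sh_def gs_def cross_gen_def ins_def)
qed

lemma ct_H:
  assumes "set x \<subseteq> H" "\<forall>h\<in>H. cj G t h = h"
  shows "ct t x = (\<lambda>y. if x = y then 1 else 0)"
proof -
  have "map (cj G t) x = x" using assms by (auto intro!: map_idI)
  then show ?thesis by (intro ext) (simp add: ct_def)
qed

end


lemma mem_rel_class: "v \<in> rel_class G A B k z \<longleftrightarrow>
   (\<exists>w u. w \<in> chains A (Suc k) \<and> u \<in> chains B k \<and> v = (\<lambda>y. z y + (bar_d G w y + u y)))"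
  unfolding rel_class_def rel_bdry_def
  apply auto
  apply (rule_tac x="\<lambda>y. bar_d G w y + u y" in exI)
  by auto

lemma mem_abs_class: "v \<in> abs_class G A k z \<longleftrightarrow>
   (\<exists>w. w \<in> chains A (Suc k) \<and> v = (\<lambda>y. z y + bar_d G w y))"
  unfolding abs_class_def abs_bdry_def by auto

lemma bar_d_add: "fin a \<Longrightarrow> fin b \<Longrightarrow> bar_d G (\<lambda>x. a x + b x) y = bar_d G a y + bar_d G b y"
  unfolding bar_d_lin by (rule lin_add)

lemma bar_d_diff: "fin a \<Longrightarrow> fin b \<Longrightarrow> bar_d G (\<lambda>x. a x - b x) y = bar_d G a y - bar_d G b y"
  unfolding bar_d_lin by (rule lin_diff)

lemma chains_diff: "c1 \<in> chains A k \<Longrightarrow> c2 \<in> chains A k \<Longrightarrow> (\<lambda>y. c1 y - c2 y) \<in> chains A k"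
  using chains_add[of c1 A k "\<lambda>y. (-1) * c2 y"] chains_scale[of c2 A k "-1"] by simp

lemma rel_class_eq:
  assumes w: "w \<in> chains A (Suc k)" and u: "u \<in> chains B k"
    and e: "\<And>y. z1 y = z2 y + bar_d G w y + u y"
  shows "rel_class G A B k z1 = rel_class G A B k z2"
proof
  show "rel_class G A B k z1 \<subseteq> rel_class G A B k z2"
  proof
    fix v assume "v \<in> rel_class G A B k z1"
    then obtain w' u' where w': "w' \<in> chains A (Suc k)" and u': "u' \<in> chains B k"
      and v: "v = (\<lambda>y. z1 y + (bar_d G w' y + u' y))" by (auto simp: mem_rel_class)
    have "v = (\<lambda>y. z2 y + (bar_d G (\<lambda>x. w x + w' x) y + (u y + u' y)))"
      using v e by (auto simp: algebra_simps bar_d_add[OF chains_fin[OF w] chains_fin[OF w']])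
    then show "v \<in> rel_class G A B k z2"
      unfolding mem_rel_class using chains_add[OF w w'] chains_add[OF u u'] by blast
  qed
  show "rel_class G A B k z2 \<subseteq> rel_class G A B k z1"
  proof
    fix v assume "v \<in> rel_class G A B k z2"
    then obtain w' u' where w': "w' \<in> chains A (Suc k)" and u': "u' \<in> chains B k"
      and v: "v = (\<lambda>y. z2 y + (bar_d G w' y + u' y))" by (auto simp: mem_rel_class)
    have "v = (\<lambda>y. z1 y + (bar_d G (\<lambda>x. w' x - w x) y + (u' y - u y)))"
      using v e by (auto simp: algebra_simps bar_d_diff[OF chains_fin[OF w'] chains_fin[OF w]])
    then show "v \<in> rel_class G A B k z1"
      unfolding mem_rel_class using chains_diff[OF w' w] chains_diff[OF u' u] by blast
  qed
qed

lemma bar_d_zero: "bar_d G (\<lambda>_. 0) = (\<lambda>_. 0)"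
  by (simp add: bar_d_def)

theorem lemma2p5:
  fixes G :: "('a, 'b) monoid_scheme" and H G1 G2 :: "'a set" and t :: 'a and k :: nat
  assumes "group G"
    and "subgroup H G" and "subgroup G1 G" and "subgroup G2 G"
    and "H \<subseteq> G1" and "H \<subseteq> G2"
    and "t \<in> carrier G"
    and "(\<lambda>g. inv\<^bsub>G\<^esub> t \<otimes>\<^bsub>G\<^esub> g \<otimes>\<^bsub>G\<^esub> t) ` G1 = G2"
    and "\<forall>h\<in>H. inv\<^bsub>G\<^esub> t \<otimes>\<^bsub>G\<^esub> h \<otimes>\<^bsub>G\<^esub> t = h"
    and "k \<ge> 1"
  shows "\<forall>X \<in> rel_homology G G1 H k.
           induced_incl G (carrier G) G2 k X =
           rel_scale G (carrier G) G2 k ((-1) ^ k)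
             (cross_hom G t (carrier G) G2 k (connecting G H k X))"
proof
  interpret group G by fact
  note HG = assms(2) and G1G = assms(3) and G2G = assms(4) and tc = assms(7) and k1 = assms(10)
  have Hc: "H \<subseteq> carrier G" using subgroup.subset[OF HG] .
  have G1c: "G1 \<subseteq> carrier G" using subgroup.subset[OF G1G] .
  have Hm: "\<And>a b. a \<in> H \<Longrightarrow> b \<in> H \<Longrightarrow> a \<otimes>\<^bsub>G\<^esub> b \<in> H" using subgroup.m_closed[OF HG] by blast
  have G1m: "\<And>a b. a \<in> G1 \<Longrightarrow> b \<in> G1 \<Longrightarrow> a \<otimes>\<^bsub>G\<^esub> b \<in> G1" using subgroup.m_closed[OF G1G] by blast
  have cjG: "\<And>g. g \<in> G1 \<Longrightarrow> cj G t g \<in> G2" using assms(8) by (auto simp: cj_def)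
  have cjH: "\<forall>h\<in>H. cj G t h = h" using assms(9) by (simp add: cj_def)
  let ?S = "lin (sh G t)"
  let ?C = "lin (ct t)"
  fix X assume "X \<in> rel_homology G G1 H k"
  then obtain z0 where z0: "z0 \<in> rel_cycles G G1 H k" and X: "X = rel_class G G1 H k z0"
    unfolding rel_homology_def by blast
  have z0c: "z0 \<in> chains G1 k" and dz0: "bar_d G z0 \<in> chains H (k - 1)"
    using z0 by (auto simp: rel_cycles_def)
  have "z0 \<in> X" unfolding X mem_rel_class
    by (rule exI[of _ "\<lambda>_. 0"], rule exI[of _ "\<lambda>_. 0"]) (simp add: chains_zero bar_d_zero)
  define z where "z = (SOME z. z \<in> X)"
  have "z \<in> X" unfolding z_def using \<open>z0 \<in> X\<close> by (rule someI[where P="\<lambda>z. z \<in> _"])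
  then obtain w1 u1 where w1: "w1 \<in> chains G1 (Suc k)" and u1: "u1 \<in> chains H k"
    and zd: "z = (\<lambda>y. z0 y + (bar_d G w1 y + u1 y))" unfolding X mem_rel_class by blast
  have u1': "u1 \<in> chains G1 k" using chains_mono[OF assms(5) u1] .
  have dw1: "bar_d G w1 \<in> chains G1 k" using bd_chains[OF G1m w1] by simp
  have zc: "z \<in> chains G1 k" unfolding zd by (intro chains_add z0c dw1 u1')
  have zcc: "z \<in> chains (carrier G) k" using chains_mono[OF G1c zc] .
  have w1c: "w1 \<in> chains (carrier G) (Suc k)" using chains_mono[OF G1c w1] .
  have "bar_d G z = (\<lambda>y. bar_d G z0 y + (bar_d G (bar_d G w1) y + bar_d G u1 y))"
  proof
    fix y
    have f: "fin z0" "fin (bar_d G w1)" "fin u1" using z0c dw1 u1 by (auto intro: chains_fin)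
    have "fin (\<lambda>y. bar_d G w1 y + u1 y)" using chains_fin[OF chains_add[OF dw1 u1']] .
    then show "bar_d G z y = bar_d G z0 y + (bar_d G (bar_d G w1) y + bar_d G u1 y)"
      unfolding zd using f by (simp add: bar_d_add)
  qed
  then have dz_eq: "bar_d G z = (\<lambda>y. bar_d G z0 y + bar_d G u1 y)"
    using dd_chain[OF w1c] by simp
  have dz: "bar_d G z \<in> chains H (k - 1)"
    unfolding dz_eq by (intro chains_add dz0 bd_chains[OF Hm u1])
  define Y where "Y = connecting G H k X"
  have Y: "Y = abs_class G H (k - 1) (bar_d G z)" unfolding Y_def connecting_def z_def ..
  have "bar_d G z \<in> Y" unfolding Y mem_abs_class
    by (rule exI[of _ "\<lambda>_. 0"]) (simp add: chains_zero bar_d_zero)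
  define y0 where "y0 = (SOME y. y \<in> Y)"
  have "y0 \<in> Y" unfolding y0_def using \<open>bar_d G z \<in> Y\<close> by (rule someI[where P="\<lambda>z. z \<in> _"])
  then obtain w2 where w2': "w2 \<in> chains H (Suc (k - 1))" and y0d: "y0 = (\<lambda>y. bar_d G z y + bar_d G w2 y)"
    unfolding Y mem_abs_class by blast
  have w2: "w2 \<in> chains H k" using w2' k1 by simp
  have w2c: "w2 \<in> chains (carrier G) k" using chains_mono[OF Hc w2] .
  have dw2: "bar_d G w2 \<in> chains H (k - 1)" using bd_chains[OF Hm w2] .
  define V where "V = cross_hom G t (carrier G) G2 k Y"
  have V: "V = rel_class G (carrier G) G2 k (cross t y0)" unfolding V_def cross_hom_def y0_def ..
  have "cross t y0 \<in> V" unfolding V mem_rel_class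
    by (rule exI[of _ "\<lambda>_. 0"], rule exI[of _ "\<lambda>_. 0"]) (simp add: chains_zero bar_d_zero)
  define v0 where "v0 = (SOME v. v \<in> V)"
  have "v0 \<in> V" unfolding v0_def using \<open>cross t y0 \<in> V\<close> by (rule someI[where P="\<lambda>z. z \<in> _"])
  then obtain w3 u3 where w3: "w3 \<in> chains (carrier G) (Suc k)" and u3: "u3 \<in> chains G2 k"
    and v0d: "v0 = (\<lambda>y. cross t y0 y + (bar_d G w3 y + u3 y))" unfolding V mem_rel_class by blast
  have LHS: "induced_incl G (carrier G) G2 k X = rel_class G (carrier G) G2 k z"
    unfolding induced_incl_def z_def ..
  have RHS: "rel_scale G (carrier G) G2 k ((-1) ^ k) V = rel_class G (carrier G) G2 k (\<lambda>y. (-1)^k * v0 y)"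
    unfolding rel_scale_def v0_def ..
  have Sz: "?S z \<in> chains (carrier G) (Suc k)" by (rule sh_chains[OF zcc tc])
  have Sw2: "?S w2 \<in> chains (carrier G) (Suc k)" by (rule sh_chains[OF w2c tc])
  have Cz: "?C z \<in> chains G2 k" by (rule ct_chains[OF zc cjG])
  have h1: "bar_d G (?S z) y - ?S (bar_d G z) y = (-1)^(Suc k) * (z y - ?C z y)" for y
    by (rule homotopy_chain[OF zcc tc])
  have h2: "bar_d G (?S w2) y - ?S (bar_d G w2) y = (-1)^(Suc k) * (w2 y - ?C w2 y)" for y
    by (rule homotopy_chain[OF w2c tc])
  have Cw2: "?C w2 = w2"
  proof -
    have "?C w2 = lin (\<lambda>x y. if x = y then 1 else 0) w2"
    proof (rule lin_cong)
      fix x assume "w2 x \<noteq> 0"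
      then have "set x \<subseteq> H" using chainsD[OF w2] by blast
      then show "ct t x = (\<lambda>y. if x = y then 1 else 0)" by (rule ct_H[OF _ cjH])
    qed
    then show ?thesis using lin_delta[OF chains_fin[OF w2]] by simp
  qed
  have c1: "?S (bar_d G z) = cross t (bar_d G z)"
    unfolding cross_lin
  proof (rule lin_cong)
    fix x assume "bar_d G z x \<noteq> 0"
    then have "set x \<subseteq> H" using chainsD[OF dz] by blast
    then show "sh G t x = cross_gen t x" by (rule sh_cross_H[OF _ cjH])
  qed
  have c2: "?S (bar_d G w2) = cross t (bar_d G w2)"
    unfolding cross_lin
  proof (rule lin_cong)
    fix x assume "bar_d G w2 x \<noteq> 0"
    then have "set x \<subseteq> H" using chainsD[OF dw2] by blast
    then show "sh G t x = cross_gen t x" by (rule sh_cross_H[OF _ cjH])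
  qed
  have c3: "cross t y0 y = cross t (bar_d G z) y + cross t (bar_d G w2) y" for y
    unfolding y0d cross_lin by (rule lin_add) (use chains_fin dz dw2 in auto)
  define W where "W = (\<lambda>x. (-1)^(Suc k) * ?S z x + (-((-1)^k)) * ?S w2 x + (-((-1)^k)) * w3 x)"
  define U where "U = (\<lambda>x. ?C z x - (-1)^k * u3 x)"
  have Wc: "W \<in> chains (carrier G) (Suc k)"
    unfolding W_def by (intro chains_add chains_scale Sz Sw2 w3)
  have Uc: "U \<in> chains G2 k"
    unfolding U_def by (intro chains_diff chains_scale Cz u3)
  have dW: "bar_d G W y = (-1)^(Suc k) * bar_d G (?S z) y + (-((-1)^k)) * bar_d G (?S w2) y
       + (-((-1)^k)) * bar_d G w3 y" for y
    unfolding W_def bar_d_lin by (rule lin_comb3) (use chains_fin Sz Sw2 w3 in auto)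
  have e: "z y = (-1)^k * v0 y + bar_d G W y + U y" for y
  proof -
    have a: "bar_d G (?S z) y - cross t (bar_d G z) y = (-1)^(Suc k) * (z y - ?C z y)"
      using h1[of y] c1 by simp
    have b: "bar_d G (?S w2) y = cross t (bar_d G w2) y"
      using h2[of y] c2 Cw2 by simp
    show ?thesis
      unfolding dW U_def v0d c3
      using a b by (cases "even k") (simp_all add: algebra_simps)
  qed
  show "induced_incl G (carrier G) G2 k X =
           rel_scale G (carrier G) G2 k ((-1) ^ k)
             (cross_hom G t (carrier G) G2 k (connecting G H k X))"
    unfolding LHS Y_def[symmetric] V_def[symmetric] RHS
    by (rule rel_class_eq[OF Wc Uc e])
qed


end
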